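(* Let $X$ be an infinite compact metrizable space and $h\colon X\to X$ a minimal homeomorphism. For any $\varepsilon>0$ and any closed universally null set $F\subset X$, there is a non-empty open set $E\subset X$ such that $F\subset E$ and $\mu(E)<\varepsilon$ for all $\mu\in M_h(X)$.
   Context: $M_h(X)$ denotes the set of $h$-invariant Borel probability measures on $X$. A Borel set $E\subset X$ is universally null if $\mu(E)=0$ for all $\mu\in M_h(X)$. *)

theory Defs
  imports "HOL-Probability.Probability"
begin

definition minimal_map :: "('a::topological_space \<Rightarrow> 'a) \<Rightarrow> bool" where
  "minimal_map h \<longleftrightarrow> (\<forall>A. closed A \<and> h ` A = A \<longrightarrow> A = {} \<or> A = UNIV)"

definition invariant_measures :: "('a::topological_space \<Rightarrow> 'a) \<Rightarrow> 'a measure set" where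
  "invariant_measures h =
     {\<mu>. sets \<mu> = sets borel \<and> prob_space \<mu> \<and>
          (\<forall>B\<in>sets borel. emeasure \<mu> (h -` B) = emeasure \<mu> B)}"

definition universally_null :: "('a::topological_space \<Rightarrow> 'a) \<Rightarrow> 'a set \<Rightarrow> bool" where
  "universally_null h E \<longleftrightarrow> E \<in> sets borel \<and> (\<forall>\<mu>\<in>invariant_measures h. emeasure \<mu> E = 0)"

end

theory Submission
  imports Defs
begin

definition cantor_val :: "(nat \<Rightarrow> bool) \<Rightarrow> real" where
  "cantor_val b = (\<Sum>i. (if b i then 2 else 0) / 3 ^ Suc i)"

lemma geom3_sums: "(\<lambda>j. 2 / 3 ^ Suc j :: real) sums 1"
proof -
  have "(\<lambda>j. (1/3::real) ^ j) sums (1 / (1 - 1/3))"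
    by (rule geometric_sums) simp
  then have "(\<lambda>j. (2/3) * (1/3::real) ^ j) sums ((2/3) * (1 / (1 - 1/3)))"
    by (rule sums_mult)
  then show ?thesis by (simp add: power_divide field_simps)
qed

lemma cantor_term_summable: "summable (\<lambda>i. (if b i then 2 else 0) / 3 ^ Suc i :: real)"
  by (rule summable_comparison_test[OF _ sums_summable[OF geom3_sums]]) auto

lemma cantor_val_bounds: "0 \<le> cantor_val b \<and> cantor_val b \<le> 1"
proof
  show "0 \<le> cantor_val b" unfolding cantor_val_def
    by (intro suminf_nonneg cantor_term_summable) auto
  have "cantor_val b \<le> (\<Sum>j. 2 / 3 ^ Suc j :: real)" unfolding cantor_val_def
    by (intro suminf_le cantor_term_summable sums_summable[OF geom3_sums]) auto
  then show "cantor_val b \<le> 1" using sums_unique[OF geom3_sums] by simp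
qed

lemma cantor_val_sep:
  assumes "\<bar>cantor_val b - cantor_val b'\<bar> < 1 / 3 ^ k" and "i < k"
  shows "b i = b' i"
proof (rule ccontr)
  assume "b i \<noteq> b' i"
  define i0 where "i0 = (LEAST j. b j \<noteq> b' j)"
  have ne: "b i0 \<noteq> b' i0" unfolding i0_def by (rule LeastI) fact
  have le: "i0 \<le> i" unfolding i0_def by (rule Least_le) fact
  have eqb: "b j = b' j" if "j < i0" for j
    using not_less_Least[OF that[unfolded i0_def]] by simp
  define D where "D j = (if b j then 2 else 0) / 3 ^ Suc j - (if b' j then 2 else 0) / (3::real) ^ Suc j" for j
  have sD: "summable D" unfolding D_def
    by (intro summable_diff cantor_term_summable)
  have diff: "cantor_val b - cantor_val b' = suminf D"
    unfolding cantor_val_def D_def by (rule suminf_diff[OF cantor_term_summable cantor_term_summable])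
  have Dbound: "\<bar>D j\<bar> \<le> 2 / 3 ^ Suc j" for j unfolding D_def by auto
  have split: "suminf D = (\<Sum>j. D (j + Suc i0)) + (\<Sum>j<Suc i0. D j)"
    by (rule suminf_split_initial_segment[OF sD])
  have fin: "(\<Sum>j<Suc i0. D j) = D i0"
    using eqb by (simp add: D_def)
  have absDi: "\<bar>D i0\<bar> = 2 / 3 ^ Suc i0" using ne unfolding D_def by auto
  have tail_sums: "(\<lambda>j. 2 / 3 ^ Suc (j + Suc i0) :: real) sums (1 / 3 ^ Suc i0)"
  proof -
    have "(\<lambda>j. (1 / 3 ^ Suc i0) * (2 / 3 ^ Suc j) :: real) sums ((1 / 3 ^ Suc i0) * 1)"
      by (rule sums_mult[OF geom3_sums])
    moreover have "(\<lambda>j. (1 / 3 ^ Suc i0) * (2 / 3 ^ Suc j) :: real) = (\<lambda>j. 2 / 3 ^ Suc (j + Suc i0))"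
      by (rule ext) (simp add: power_add field_simps)
    ultimately show ?thesis by simp
  qed
  have sT: "summable (\<lambda>j. D (j + Suc i0))"
    using sD by (rule summable_ignore_initial_segment)
  have DB: "norm (D (j + Suc i0)) \<le> 2 / 3 ^ Suc (j + Suc i0)" for j
    using Dbound[of "j + Suc i0"] by simp
  have sA: "summable (\<lambda>j. \<bar>D (j + Suc i0)\<bar>)"
    by (rule summable_rabs_comparison_test[OF _ sums_summable[OF tail_sums]]) (use DB in auto)
  have "\<bar>\<Sum>j. D (j + Suc i0)\<bar> \<le> (\<Sum>j. \<bar>D (j + Suc i0)\<bar>)"
    by (rule summable_rabs[OF sA])
  also have "\<dots> \<le> (\<Sum>j. 2 / 3 ^ Suc (j + Suc i0))"
    by (rule suminf_le[OF _ sA sums_summable[OF tail_sums]]) (use DB in auto)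
  also have "\<dots> = 1 / 3 ^ Suc i0" using sums_unique[OF tail_sums] by simp
  finally have tail: "\<bar>\<Sum>j. D (j + Suc i0)\<bar> \<le> 1 / 3 ^ Suc i0" .
  have "\<bar>cantor_val b - cantor_val b'\<bar> \<ge> 2 / 3 ^ Suc i0 - 1 / 3 ^ Suc i0"
    using diff split fin absDi tail by linarith
  then have "\<bar>cantor_val b - cantor_val b'\<bar> \<ge> 1 / 3 ^ Suc i0" by simp
  moreover have "(1::real) / 3 ^ k \<le> 1 / 3 ^ Suc i0"
    using le assms(2) by (intro divide_left_mono power_increasing) auto
  ultimately show False using assms(1) by linarith
qed

lemma triangle_strict_mono: "a < b \<Longrightarrow> triangle a < triangle b"
proof (induction b)
  case 0 then show ?case by simp
next
  case (Suc b)
  then show ?case by (cases "a = b") (auto simp: triangle_Suc)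
qed

lemma prod_encode_less2: "j < n \<Longrightarrow> prod_encode (q, j) < prod_encode (q, n)"
  by (simp add: prod_encode_def triangle_strict_mono)

lemma closed_family_sep:
  fixes dummy :: "'a::metric_space"
  assumes cpt: "compact (UNIV :: 'a set)"
  obtains C :: "nat \<Rightarrow> 'a set" where "\<And>i. closed (C i)"
    "\<And>e. e > 0 \<Longrightarrow> \<exists>k. \<forall>x y. (\<forall>i<k. x \<in> C i \<longleftrightarrow> y \<in> C i) \<longrightarrow> dist x y < e"
proof -
  have "\<exists>T. finite T \<and> (UNIV::'a set) \<subseteq> (\<Union>t\<in>T. ball t (1 / (real q + 1)))" for q :: nat
  proof -
    have cov: "UNIV \<subseteq> (\<Union>t\<in>(UNIV::'a set). ball t (1 / (real q + 1)))"
    proof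
      fix x :: 'a assume "x \<in> UNIV"
      have "x \<in> ball x (1 / (real q + 1))" by simp
      then show "x \<in> (\<Union>t\<in>UNIV. ball t (1 / (real q + 1)))" by blast
    qed
    obtain T' :: "'a set" where "T' \<subseteq> UNIV" "finite T'" "UNIV \<subseteq> (\<Union>t\<in>T'. ball t (1 / (real q + 1)))"
      by (rule compactE_image[OF cpt open_ball cov])
    then show ?thesis by blast
  qed
  then have "\<exists>T. \<forall>q. finite (T q) \<and> (UNIV::'a set) \<subseteq> (\<Union>t\<in>T q. ball t (1 / (real q + 1)))"
    by (intro choice allI)
  then obtain T where T0: "\<forall>q. finite (T q) \<and> (UNIV::'a set) \<subseteq> (\<Union>t\<in>T q. ball t (1 / (real q + 1)))"
    by blast
  have T: "finite (T q)" "(UNIV::'a set) \<subseteq> (\<Union>t\<in>T q. ball t (1 / (real q + 1)))" for q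
    using T0 by auto
  define L where "L q = (SOME xs. set xs = T q)" for q
  have L: "set (L q) = T q" for q
    unfolding L_def by (rule someI_ex) (rule finite_list[OF T(1)])
  define C where "C i = (case prod_decode i of (q, j) \<Rightarrow>
      if j < length (L q) then cball (L q ! j) (1 / (real q + 1)) else {})" for i
  show ?thesis
  proof
    show "closed (C i)" for i
      unfolding C_def by (auto split: prod.split)
    fix e :: real assume e: "e > 0"
    obtain q :: nat where q0: "inverse (real (Suc q)) < e / 2"
      using reals_Archimedean[of "e/2"] e by auto
    then have q: "1 / (real q + 1) < e / 2" by (simp add: inverse_eq_divide add.commute)
    show "\<exists>k. \<forall>x y. (\<forall>i<k. x \<in> C i \<longleftrightarrow> y \<in> C i) \<longrightarrow> dist x y < e"
    proof (intro exI allI impI)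
      fix x y assume agree: "\<forall>i<prod_encode (q, length (L q)). x \<in> C i \<longleftrightarrow> y \<in> C i"
      obtain t where t: "t \<in> T q" "x \<in> ball t (1 / (real q + 1))" using T(2)[of q] by blast
      then obtain j where j: "j < length (L q)" "L q ! j = t" using L by (metis in_set_conv_nth)
      have ci: "C (prod_encode (q, j)) = cball t (1 / (real q + 1))"
        unfolding C_def using j by simp
      have "prod_encode (q, j) < prod_encode (q, length (L q))"
        using j(1) by (rule prod_encode_less2)
      moreover have "x \<in> C (prod_encode (q, j))" using ci t(2) by auto
      ultimately have "y \<in> cball t (1 / (real q + 1))" using agree ci by auto
      then have "dist x y < 2 * (1 / (real q + 1))"
        using t(2) dist_triangle[of x y t] by (simp add: dist_commute)
      then show "dist x y < e" using q by linarith
    qed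
  qed
qed

lemma coding_exists:
  fixes dummy :: "'a::metric_space"
  assumes cpt: "compact (UNIV :: 'a set)"
  obtains \<psi> :: "'a \<Rightarrow> real" where "\<psi> \<in> borel_measurable borel" "\<And>x. 0 \<le> \<psi> x \<and> \<psi> x \<le> 1"
    "\<And>e. e > 0 \<Longrightarrow> \<exists>d>0. \<forall>x y. \<bar>\<psi> x - \<psi> y\<bar> < d \<longrightarrow> dist x y < e"
proof -
  obtain C :: "nat \<Rightarrow> 'a set" where C: "\<And>i. closed (C i)"
    "\<And>e. e > 0 \<Longrightarrow> \<exists>k. \<forall>x y. (\<forall>i<k. x \<in> C i \<longleftrightarrow> y \<in> C i) \<longrightarrow> dist x y < e"
    using closed_family_sep[OF cpt] by blast
  define \<psi> where "\<psi> x = cantor_val (\<lambda>i. x \<in> C i)" for x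
  show ?thesis
  proof
    have [measurable]: "C i \<in> sets borel" for i using C(1) by auto
    have m: "(\<lambda>x. (if x \<in> C i then 2 else 0) / 3 ^ Suc i :: real) \<in> borel_measurable borel" for i
      by (intro borel_measurable_divide measurable_If_set) auto
    show "\<psi> \<in> borel_measurable borel"
      unfolding \<psi>_def cantor_val_def by (rule borel_measurable_suminf[OF m])
    show "0 \<le> \<psi> x \<and> \<psi> x \<le> 1" for x unfolding \<psi>_def by (rule cantor_val_bounds)
    fix e :: real assume "e > 0"
    then obtain k where k: "\<forall>x y. (\<forall>i<k. x \<in> C i \<longleftrightarrow> y \<in> C i) \<longrightarrow> dist x y < e"
      using C(2) by blast
    show "\<exists>d>0. \<forall>x y. \<bar>\<psi> x - \<psi> y\<bar> < d \<longrightarrow> dist x y < e"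
    proof (intro exI[of _ "1 / 3 ^ k"] conjI allI impI)
      fix x y assume "\<bar>\<psi> x - \<psi> y\<bar> < 1 / 3 ^ k"
      then have "\<forall>i<k. x \<in> C i \<longleftrightarrow> y \<in> C i"
        unfolding \<psi>_def using cantor_val_sep[of "\<lambda>i. x \<in> C i" "\<lambda>i. y \<in> C i" k] by blast
      then show "dist x y < e" using k by blast
    qed simp
  qed
qed

lemma decoding_exists:
  fixes \<psi> :: "'a::metric_space \<Rightarrow> real"
  assumes cpt: "compact (UNIV::'a set)"
    and P: "\<And>e. e > 0 \<Longrightarrow> \<exists>d>0. \<forall>x y. \<bar>\<psi> x - \<psi> y\<bar> < d \<longrightarrow> dist x y < e"
  obtains \<pi> where "continuous_on (closure (range \<psi>)) \<pi>" "\<And>x. \<pi> (\<psi> x) = x"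
proof -
  define R where "R t x \<longleftrightarrow> (\<exists>s. (\<lambda>n. \<psi> (s n)) \<longlonglongrightarrow> t \<and> s \<longlonglongrightarrow> x)" for t x
  have key: "dist x x' \<le> e"
    if "R t x" "R t' x'" "e > 0" "\<forall>x y. \<bar>\<psi> x - \<psi> y\<bar> < d \<longrightarrow> dist x y < e" "\<bar>t - t'\<bar> < d"
    for t t' x x' e d
  proof -
    have "\<exists>s. (\<lambda>n. \<psi> (s n)) \<longlonglongrightarrow> t \<and> s \<longlonglongrightarrow> x" using that(1) unfolding R_def .
    then obtain s where s: "(\<lambda>n. \<psi> (s n)) \<longlonglongrightarrow> t" "s \<longlonglongrightarrow> x" by blast
    have "\<exists>s. (\<lambda>n. \<psi> (s n)) \<longlonglongrightarrow> t' \<and> s \<longlonglongrightarrow> x'" using that(2) unfolding R_def .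
    then obtain s' where s': "(\<lambda>n. \<psi> (s' n)) \<longlonglongrightarrow> t'" "s' \<longlonglongrightarrow> x'" by blast
    have "(\<lambda>n. \<bar>\<psi> (s n) - \<psi> (s' n)\<bar>) \<longlonglongrightarrow> \<bar>t - t'\<bar>"
      by (rule tendsto_rabs[OF tendsto_diff[OF s(1) s'(1)]])
    from order_tendstoD(2)[OF this that(5)]
    have ev0: "eventually (\<lambda>n. \<bar>\<psi> (s n) - \<psi> (s' n)\<bar> < d) sequentially" .
    have ev: "eventually (\<lambda>n. dist (s n) (s' n) \<le> e) sequentially"
    proof (rule eventually_mono[OF ev0])
      fix n assume "\<bar>\<psi> (s n) - \<psi> (s' n)\<bar> < d"
      then have "dist (s n) (s' n) < e" using that(4) by blast
      then show "dist (s n) (s' n) \<le> e" by simp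
    qed
    have "(\<lambda>n. dist (s n) (s' n)) \<longlonglongrightarrow> dist x x'"
      by (rule tendsto_dist[OF s(2) s'(2)])
    then show ?thesis using ev by (rule tendsto_upperbound) simp
  qed
  have uniq: "x = x'" if "R t x" "R t x'" for t x x'
  proof -
    have "dist x x' \<le> 0 + e" if e: "e > 0" for e
    proof -
      obtain d where d: "d > 0" "\<forall>x y. \<bar>\<psi> x - \<psi> y\<bar> < d \<longrightarrow> dist x y < e"
        using P[OF e] by blast
      have "\<bar>t - t\<bar> < d" using d(1) by simp
      from key[OF \<open>R t x\<close> \<open>R t x'\<close> e d(2) this] show ?thesis by simp
    qed
    then have "dist x x' \<le> 0" by (rule field_le_epsilon)
    then show ?thesis by simp
  qed
  have ex: "\<exists>x. R t x" if "t \<in> closure (range \<psi>)" for t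
  proof -
    from closure_sequential[THEN iffD1, OF that]
    obtain s0 where s0: "\<forall>n. s0 n \<in> range \<psi>" "s0 \<longlonglongrightarrow> t" by blast
    then have "\<forall>n. \<exists>y. \<psi> y = s0 n" by (metis rangeE)
    then have "\<exists>s. \<forall>n. \<psi> (s n) = s0 n" by (rule choice)
    then obtain s where s: "\<forall>n. \<psi> (s n) = s0 n" by blast
    have sc: "seq_compact (UNIV::'a set)" using compact_imp_seq_compact[OF cpt] .
    have "\<forall>n. s n \<in> UNIV" by simp
    from seq_compactE[OF sc this]
    obtain l r where r: "strict_mono r" "(s \<circ> r) \<longlonglongrightarrow> l" by blast
    have "(s0 \<circ> r) \<longlonglongrightarrow> t" by (rule LIMSEQ_subseq_LIMSEQ[OF s0(2) r(1)])
    moreover have "(s0 \<circ> r) = (\<lambda>n. \<psi> ((s \<circ> r) n))" using s by (simp add: fun_eq_iff)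
    ultimately have "(\<lambda>n. \<psi> ((s \<circ> r) n)) \<longlonglongrightarrow> t" by simp
    then show ?thesis unfolding R_def using r(2) by blast
  qed
  define \<pi> where "\<pi> t = (SOME x. R t x)" for t
  have R\<pi>: "R t (\<pi> t)" if "t \<in> closure (range \<psi>)" for t
    unfolding \<pi>_def using ex[OF that] by (rule someI_ex)
  show ?thesis
  proof
    show "\<pi> (\<psi> x) = x" for x
    proof -
      have "R (\<psi> x) x" unfolding R_def by (intro exI[of _ "\<lambda>_. x"]) simp
      moreover have "\<psi> x \<in> closure (range \<psi>)" by (simp add: closure_subset[THEN subsetD])
      ultimately show ?thesis using uniq[OF R\<pi>[of "\<psi> x"], of x] by simp
    qed
    have "uniformly_continuous_on (closure (range \<psi>)) \<pi>"
      unfolding uniformly_continuous_on_def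
    proof (intro allI impI)
      fix e :: real assume e: "e > 0"
      then obtain d where d: "d > 0" "\<forall>x y. \<bar>\<psi> x - \<psi> y\<bar> < d \<longrightarrow> dist x y < e / 2"
        using P[of "e/2"] by auto
      show "\<exists>d>0. \<forall>x\<in>closure (range \<psi>). \<forall>x'\<in>closure (range \<psi>). dist x' x < d \<longrightarrow> dist (\<pi> x') (\<pi> x) < e"
      proof (intro exI[of _ d] conjI ballI impI)
        fix t t' assume t: "t \<in> closure (range \<psi>)" and t': "t' \<in> closure (range \<psi>)" and "dist t' t < d"
        then have "\<bar>t' - t\<bar> < d" by (simp add: dist_real_def)
        then have "dist (\<pi> t') (\<pi> t) \<le> e / 2"
          using key[OF R\<pi>[OF t'] R\<pi>[OF t], of "e/2" d] e d by simp
        then show "dist (\<pi> t') (\<pi> t) < e" using e by linarith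
      qed (use d in auto)
    qed
    then show "continuous_on (closure (range \<psi>)) \<pi>"
      by (rule uniformly_continuous_imp_continuous)
  qed
qed

lemma finite_measure_eq_by_cont:
  fixes M N :: "'a::metric_space measure"
  assumes sM: "sets M = sets borel" and sN: "sets N = sets borel"
    and fM: "finite_measure M" and fN: "finite_measure N"
    and eqint: "\<And>f::'a \<Rightarrow> real. continuous_on UNIV f \<Longrightarrow> (\<And>x. 0 \<le> f x \<and> f x \<le> 1) \<Longrightarrow>
               (\<integral>x. f x \<partial>M) = (\<integral>x. f x \<partial>N)"
  shows "M = N"
proof -
  have lim_meas: "(\<lambda>k. \<integral>x. max 0 (1 - real k * infdist x C) \<partial>L) \<longlonglongrightarrow> measure L C"
    if L: "sets L = sets borel" "finite_measure L" and C: "closed C" "C \<noteq> {}" for L :: "'a measure" and C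
  proof -
    interpret finite_measure L by fact
    have CL: "C \<in> sets L" using L C by auto
    have "(\<lambda>k. \<integral>x. max 0 (1 - real k * infdist x C) \<partial>L) \<longlonglongrightarrow> (\<integral>x. indicator C x \<partial>L)"
    proof (rule integral_dominated_convergence[where w="\<lambda>_. 1"])
      show "(indicator C :: 'a \<Rightarrow> real) \<in> borel_measurable L" using CL by simp
      show "(\<lambda>x. max 0 (1 - real k * infdist x C)) \<in> borel_measurable L" for k
        unfolding measurable_cong_sets[OF L(1) refl]
        by (intro borel_measurable_continuous_onI continuous_intros continuous_on_infdist)
      show "integrable L (\<lambda>_. 1::real)" by simp
      show "AE x in L. norm (max 0 (1 - real k * infdist x C)) \<le> 1" for k
        by (intro AE_I2) (auto simp: infdist_nonneg)
      show "AE x in L. (\<lambda>k. max 0 (1 - real k * infdist x C)) \<longlonglongrightarrow> indicator C x"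
      proof (intro AE_I2)
        fix x
        show "(\<lambda>k. max 0 (1 - real k * infdist x C)) \<longlonglongrightarrow> indicator C x"
        proof (cases "x \<in> C")
          case True
          then show ?thesis by (simp add: infdist_zero)
        next
          case False
          have d: "infdist x C > 0"
            using False C in_closed_iff_infdist_zero[OF C] infdist_nonneg[of x C]
            by (metis less_eq_real_def)
          obtain K :: nat where K: "1 / infdist x C < real K" using reals_Archimedean2 by blast
          have "eventually (\<lambda>k. max 0 (1 - real k * infdist x C) = 0) sequentially"
            unfolding eventually_sequentially
          proof (intro exI allI impI)
            fix k assume "K \<le> k"
            then have "1 / infdist x C < real k" using K by linarith
            then have "1 < real k * infdist x C" using d by (simp add: field_simps)
            then show "max 0 (1 - real k * infdist x C) = 0" by simp
          qed
          then show ?thesis using False by (simp add: tendsto_eventually)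
        qed
      qed
    qed
    then show ?thesis using CL by simp
  qed
  have clo: "emeasure M C = emeasure N C" if C: "closed C" for C
  proof (cases "C = {}")
    case True then show ?thesis by simp
  next
    case False
    have "(\<lambda>k. \<integral>x. max 0 (1 - real k * infdist x C) \<partial>M) = (\<lambda>k. \<integral>x. max 0 (1 - real k * infdist x C) \<partial>N)"
    proof
      fix k
      show "(\<integral>x. max 0 (1 - real k * infdist x C) \<partial>M) = (\<integral>x. max 0 (1 - real k * infdist x C) \<partial>N)"
        by (rule eqint) (auto intro!: continuous_intros continuous_on_infdist simp: infdist_nonneg)
    qed
    then have "measure M C = measure N C"
      using lim_meas[OF sM fM C False] lim_meas[OF sN fN C False] LIMSEQ_unique by metis
    then show ?thesis
      using fM fN by (simp add: finite_measure.emeasure_eq_measure)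
  qed
  have sb: "sets (borel :: 'a measure) = sigma_sets UNIV (Collect closed)"
    by (subst borel_eq_closed) (simp add: sets_measure_of)
  show ?thesis
  proof (rule measure_eqI_generator_eq[where E="Collect closed" and \<Omega>=UNIV and A="\<lambda>_. UNIV"])
    show "Int_stable (Collect closed :: 'a set set)" by (auto simp: Int_stable_def)
  qed (use clo sM sN sb fM fN in \<open>auto simp: finite_measure.emeasure_finite\<close>)
qed

lemma weak_limit_exists:
  fixes \<mu> :: "nat \<Rightarrow> 'a::metric_space measure"
  assumes cpt: "compact (UNIV :: 'a set)"
    and sets\<mu>: "\<And>n. sets (\<mu> n) = sets borel" and prob\<mu>: "\<And>n. prob_space (\<mu> n)"
  obtains r \<mu>' where "strict_mono r" "sets \<mu>' = sets borel" "prob_space \<mu>'"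
    "\<And>f::'a \<Rightarrow> real. continuous_on UNIV f \<Longrightarrow> (\<lambda>n. \<integral>x. f x \<partial>\<mu> (r n)) \<longlonglongrightarrow> (\<integral>x. f x \<partial>\<mu>')"
proof -
  obtain \<psi> :: "'a \<Rightarrow> real" where \<psi>m: "\<psi> \<in> borel_measurable borel"
    and \<psi>b: "\<And>x. 0 \<le> \<psi> x \<and> \<psi> x \<le> 1"
    and \<psi>P: "\<And>e. e > 0 \<Longrightarrow> \<exists>d>0. \<forall>x y. \<bar>\<psi> x - \<psi> y\<bar> < d \<longrightarrow> dist x y < e"
    using coding_exists[OF cpt] by blast
  obtain \<pi> where \<pi>c: "continuous_on (closure (range \<psi>)) \<pi>" and \<pi>\<psi>: "\<And>x. \<pi> (\<psi> x) = x"
    using decoding_exists[OF cpt \<psi>P] by blast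
  define K where "K = closure (range \<psi>)"
  have Kc: "closed K" unfolding K_def by simp
  have Kne: "K \<noteq> {}" unfolding K_def by simp
  have \<psi>K: "\<psi> x \<in> K" for x unfolding K_def by (simp add: closure_subset[THEN subsetD])
  have \<psi>m': "\<psi> \<in> measurable (\<mu> n) borel" for n
    using \<psi>m by (simp add: measurable_cong_sets[OF sets\<mu> refl])
  define \<nu> where "\<nu> n = distr (\<mu> n) borel \<psi>" for n
  have rd: "real_distribution (\<nu> n)" for n
  proof -
    interpret prob_space "\<mu> n" by (rule prob\<mu>)
    have "prob_space (\<nu> n)" unfolding \<nu>_def by (rule prob_space_distr[OF \<psi>m'])
    then show ?thesis unfolding real_distribution_def real_distribution_axioms_def \<nu>_def by simp
  qed
  have tight: "tight \<nu>"
    unfolding tight_def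
  proof (intro conjI allI impI)
    show "real_distribution (\<nu> n)" for n by (rule rd)
    fix \<epsilon> :: real assume "\<epsilon> > 0"
    show "\<exists>a b. a < b \<and> (\<forall>n. 1 - \<epsilon> < measure (\<nu> n) {a<..b})"
    proof -
      have eq1: "measure (\<nu> n) {-1<..2} = 1" for n
      proof -
        interpret prob_space "\<mu> n" by (rule prob\<mu>)
        have "measure (\<nu> n) {-1<..2} = measure (\<mu> n) (\<psi> -` {-1<..2} \<inter> space (\<mu> n))"
          unfolding \<nu>_def by (rule measure_distr[OF \<psi>m']) simp
        also have "\<psi> -` {-1<..2} \<inter> space (\<mu> n) = space (\<mu> n)"
        proof (intro equalityI subsetI)
          fix x assume "x \<in> space (\<mu> n)"
          moreover have "-1 < \<psi> x" "\<psi> x \<le> 2" using \<psi>b[of x] by linarith+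
          ultimately show "x \<in> \<psi> -` {-1<..2} \<inter> space (\<mu> n)" by simp
        qed simp
        also have "measure (\<mu> n) (space (\<mu> n)) = 1" by (rule prob_space)
        finally show ?thesis .
      qed
      show ?thesis
        by (rule exI[of _ "-1"], rule exI[of _ 2]) (use eq1 \<open>\<epsilon> > 0\<close> in auto)
    qed
  qed
  obtain r M where r: "strict_mono r" and rdM: "real_distribution M"
    and wc: "weak_conv_m (\<nu> \<circ> id \<circ> r) M"
    using tight_imp_convergent_subsubsequence[OF tight strict_mono_id] by blast
  interpret M: real_distribution M by (rule rdM)
  have rd': "real_distribution ((\<nu> \<circ> id \<circ> r) n)" for n using rd by simp
  note conv = weak_conv_imp_integral_bdd_continuous_conv[OF rd' rdM wc]
  have int\<nu>: "(\<integral>t. G t \<partial>(\<nu> \<circ> id \<circ> r) n) = (\<integral>x. G (\<psi> x) \<partial>\<mu> (r n))"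
    if "continuous_on UNIV G" for G :: "real \<Rightarrow> real" and n
    unfolding \<nu>_def comp_def id_def
    by (rule integral_distr[OF \<psi>m']) (rule borel_measurable_continuous_onI[OF that])
  have AEK: "AE t in M. t \<in> K"
  proof -
    define G where "G t = max 0 (1 - infdist t K)" for t
    have Gc: "continuous_on UNIV G" unfolding G_def
      by (intro continuous_intros continuous_on_infdist)
    have Gb: "norm (G t) \<le> 1" for t unfolding G_def using infdist_nonneg[of t K] by auto
    have "(\<lambda>n. \<integral>t. G t \<partial>(\<nu> \<circ> id \<circ> r) n) \<longlonglongrightarrow> (\<integral>t. G t \<partial>M)"
      by (rule conv) (use Gc continuous_on_eq_continuous_at[of UNIV G] Gb in auto)
    moreover have "(\<integral>t. G t \<partial>(\<nu> \<circ> id \<circ> r) n) = 1" for n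
    proof -
      interpret prob_space "\<mu> (r n)" by (rule prob\<mu>)
      have "(\<integral>t. G t \<partial>(\<nu> \<circ> id \<circ> r) n) = (\<integral>x. G (\<psi> x) \<partial>\<mu> (r n))" by (rule int\<nu>[OF Gc])
      also have "\<dots> = (\<integral>x. 1 \<partial>\<mu> (r n))"
        unfolding G_def using \<psi>K by (simp add: infdist_zero)
      also have "\<dots> = 1" by (simp add: prob_space)
      finally show ?thesis .
    qed
    ultimately have "(\<lambda>n::nat. 1::real) \<longlonglongrightarrow> (\<integral>t. G t \<partial>M)" by simp
    then have IG: "(\<integral>t. G t \<partial>M) = 1" by (simp add: LIMSEQ_const_iff)
    have Gm: "G \<in> borel_measurable M"
      using borel_measurable_continuous_onI[OF Gc] by (simp add: measurable_cong_sets[OF M.events_eq_borel refl])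
    have intG: "integrable M G"
      by (rule M.integrable_const_bound[where B=1]) (use Gb Gm in auto)
    have int1: "integrable M (\<lambda>t. 1 - G t)"
      by (intro Bochner_Integration.integrable_diff M.integrable_const intG)
    have nn: "AE t in M. 0 \<le> 1 - G t"
    proof (rule AE_I2)
      fix t show "0 \<le> 1 - G t" using Gb[of t] by simp
    qed
    have "(\<integral>t. 1 - G t \<partial>M) = 0"
      using IG intG M.prob_space sets_eq_imp_space_eq[OF M.events_eq_borel] by simp
    then have ae: "AE t in M. 1 - G t = 0"
      using integral_nonneg_eq_0_iff_AE[OF int1 nn] by simp
    have imp: "t \<in> K" if "1 - G t = 0" for t
    proof -
      from that have "infdist t K \<le> 0" unfolding G_def by linarith
      then have "infdist t K = 0" using infdist_nonneg[of t K] by linarith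
      then show "t \<in> K" using in_closed_iff_infdist_zero[OF Kc Kne] by simp
    qed
    show ?thesis
      by (rule AE_mp[OF ae], rule AE_I2) (use imp in blast)
  qed
  define x0 where "x0 = (undefined :: 'a)"
  define \<pi>' where "\<pi>' t = (if t \<in> K then \<pi> t else x0)" for t
  have \<pi>'m: "\<pi>' \<in> borel_measurable borel"
    unfolding \<pi>'_def
  proof (rule borel_measurable_continuous_on_if)
    show "K \<in> sets borel" using Kc by simp
    show "continuous_on K \<pi>" using \<pi>c unfolding K_def .
    show "continuous_on (- K) (\<lambda>_. x0)" by (rule continuous_on_const)
  qed
  have \<pi>'mM: "\<pi>' \<in> measurable M borel"
    using \<pi>'m by (simp add: measurable_cong_sets[OF M.events_eq_borel refl])
  define \<mu>' where "\<mu>' = distr M borel \<pi>'"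
  show ?thesis
  proof
    show "strict_mono r" by (rule r)
    show "sets \<mu>' = sets borel" unfolding \<mu>'_def by simp
    show "prob_space \<mu>'" unfolding \<mu>'_def by (rule M.prob_space_distr[OF \<pi>'mM])
    fix f :: "'a \<Rightarrow> real" assume fc: "continuous_on UNIV f"
    have "bounded (range f)"
      using compact_imp_bounded[OF compact_continuous_image[OF fc cpt]] by simp
    then obtain B where B0': "\<forall>y\<in>range f. norm y \<le> B" unfolding bounded_iff by (elim exE)
    have B: "norm (f x) \<le> B" for x using B0' by simp
    have B0: "0 \<le> B" using B[of x0] norm_ge_zero[of "f x0"] by linarith
    have fpc: "continuous_on K (f \<circ> \<pi>)"
      by (rule continuous_on_compose[OF \<pi>c[folded K_def] continuous_on_subset[OF fc subset_UNIV]])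
    have cl: "closedin (top_of_set UNIV) K" by (rule closed_subset[OF subset_UNIV Kc])
    have bd: "\<And>t. t \<in> K \<Longrightarrow> norm ((f \<circ> \<pi>) t) \<le> B" using B by simp
    have "\<exists>G. continuous_on UNIV G \<and> (\<forall>t\<in>K. G t = f (\<pi> t)) \<and> (\<forall>t. norm (G t) \<le> B)"
    proof (rule Tietze[OF fpc cl B0 bd])
      fix g assume g: "continuous_on UNIV g" "\<And>x. x \<in> K \<Longrightarrow> g x = (f \<circ> \<pi>) x"
        "\<And>x. x \<in> UNIV \<Longrightarrow> norm (g x) \<le> B"
      show "\<exists>G. continuous_on UNIV G \<and> (\<forall>t\<in>K. G t = f (\<pi> t)) \<and> (\<forall>t. norm (G t) \<le> B)"
        by (rule exI[of _ g]) (use g in auto)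
    qed
    then obtain G where Gc: "continuous_on UNIV G" and GK: "\<And>t. t \<in> K \<Longrightarrow> G t = f (\<pi> t)"
      and Gb: "\<And>t. norm (G t) \<le> B" by blast
    have "(\<lambda>n. \<integral>t. G t \<partial>(\<nu> \<circ> id \<circ> r) n) \<longlonglongrightarrow> (\<integral>t. G t \<partial>M)"
      by (rule conv) (use Gc continuous_on_eq_continuous_at[of UNIV G] Gb in auto)
    moreover have "(\<integral>t. G t \<partial>(\<nu> \<circ> id \<circ> r) n) = (\<integral>x. f x \<partial>\<mu> (r n))" for n
      using int\<nu>[OF Gc, of n] GK[OF \<psi>K] \<pi>\<psi> by simp
    moreover have "(\<integral>t. G t \<partial>M) = (\<integral>x. f x \<partial>\<mu>')"
    proof -
      have "(\<integral>t. G t \<partial>M) = (\<integral>t. f (\<pi>' t) \<partial>M)"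
      proof (rule integral_cong_AE)
        show "G \<in> borel_measurable M"
          using borel_measurable_continuous_onI[OF Gc] by (simp add: measurable_cong_sets[OF M.events_eq_borel refl])
        show "(\<lambda>t. f (\<pi>' t)) \<in> borel_measurable M"
          by (rule measurable_compose[OF \<pi>'mM borel_measurable_continuous_onI[OF fc]])
        show "AE t in M. G t = f (\<pi>' t)"
          by (rule AE_mp[OF AEK], rule AE_I2) (simp add: GK \<pi>'_def)
      qed
      also have "\<dots> = (\<integral>x. f x \<partial>\<mu>')"
        unfolding \<mu>'_def by (rule integral_distr[symmetric, OF \<pi>'mM borel_measurable_continuous_onI[OF fc]])
      finally show ?thesis .
    qed
    ultimately show "(\<lambda>n. \<integral>x. f x \<partial>\<mu> (r n)) \<longlonglongrightarrow> (\<integral>x. f x \<partial>\<mu>')" by simp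
  qed
qed

lemma inv_meas_props:
  assumes "\<mu> \<in> invariant_measures h"
  shows "sets \<mu> = sets borel" "prob_space \<mu>" "space \<mu> = UNIV"
    "\<And>B. B \<in> sets borel \<Longrightarrow> emeasure \<mu> (h -` B) = emeasure \<mu> B"
  using assms unfolding invariant_measures_def
  by (auto dest: sets_eq_imp_space_eq)

lemma inv_distr_eq:
  fixes h :: "'a::metric_space \<Rightarrow> 'a"
  assumes "\<mu> \<in> invariant_measures h" and hm: "h \<in> borel_measurable borel"
  shows "distr \<mu> borel h = \<mu>"
proof -
  note P = inv_meas_props[OF assms(1)]
  have hm': "h \<in> measurable \<mu> borel" using hm by (simp add: measurable_cong_sets[OF P(1) refl])
  show ?thesis
  proof (rule measure_eqI)
    show "sets (distr \<mu> borel h) = sets \<mu>" using P(1) by simp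
    fix A assume "A \<in> sets (distr \<mu> borel h)"
    then have A: "A \<in> sets borel" by simp
    have "emeasure (distr \<mu> borel h) A = emeasure \<mu> (h -` A \<inter> space \<mu>)"
      by (rule emeasure_distr[OF hm' A])
    also have "\<dots> = emeasure \<mu> A" using P(3) P(4)[OF A] by simp
    finally show "emeasure (distr \<mu> borel h) A = emeasure \<mu> A" .
  qed
qed

lemma weak_limit_exists':
  fixes \<mu> :: "nat \<Rightarrow> 'a::metric_space measure"
  assumes cpt: "compact (UNIV :: 'a set)"
    and sets\<mu>: "\<And>n. sets (\<mu> n) = sets borel" and prob\<mu>: "\<And>n. prob_space (\<mu> n)"
  shows "\<exists>r \<mu>'. strict_mono r \<and> sets \<mu>' = sets borel \<and> prob_space \<mu>' \<and>
    (\<forall>f::'a \<Rightarrow> real. continuous_on UNIV f \<longrightarrow> (\<lambda>n. \<integral>x. f x \<partial>\<mu> (r n)) \<longlonglongrightarrow> (\<integral>x. f x \<partial>\<mu>'))"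
proof (rule weak_limit_exists[of \<mu>, OF cpt sets\<mu> prob\<mu>])
  fix r \<mu>' assume A: "strict_mono r" "sets \<mu>' = sets borel" "prob_space \<mu>'"
    "\<And>f::'a \<Rightarrow> real. continuous_on UNIV f \<Longrightarrow> (\<lambda>n. \<integral>x. f x \<partial>\<mu> (r n)) \<longlonglongrightarrow> (\<integral>x. f x \<partial>\<mu>')"
  show ?thesis
    by (rule exI[of _ r], rule exI[of _ \<mu>']) (use A in blast)
qed

lemma main_case:
  fixes h :: "'a::metric_space \<Rightarrow> 'a" and F :: "'a set" and \<epsilon> :: real
  assumes cpt: "compact (UNIV :: 'a set)" and hc: "continuous_on UNIV h"
    and e: "\<epsilon> > 0" and Fc: "closed F" and Fne: "F \<noteq> {}" and un: "universally_null h F"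
  shows "\<exists>E. open E \<and> E \<noteq> {} \<and> F \<subseteq> E \<and>
             (\<forall>\<mu>\<in>invariant_measures h. emeasure \<mu> E < ennreal \<epsilon>)"
proof (rule ccontr)
  assume neg: "\<not> ?thesis"
  have hm: "h \<in> borel_measurable borel" by (rule borel_measurable_continuous_onI[OF hc])
  define U where "U n = {x. infdist x F < 1 / (real n + 1)}" for n
  have Uo: "open (U n)" for n unfolding U_def
    by (rule open_Collect_less) (auto intro!: continuous_intros continuous_on_infdist)
  have FU: "F \<subseteq> U n" for n unfolding U_def by (auto simp: infdist_zero)
  have Une: "U n \<noteq> {}" for n using FU Fne by blast
  have ex: "\<exists>\<mu>. \<mu> \<in> invariant_measures h \<and> \<not> emeasure \<mu> (U n) < ennreal \<epsilon>" for n
  proof (rule ccontr)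
    assume "\<not> ?thesis"
    then have all: "\<forall>\<mu>\<in>invariant_measures h. emeasure \<mu> (U n) < ennreal \<epsilon>" by blast
    have "\<exists>E. open E \<and> E \<noteq> {} \<and> F \<subseteq> E \<and> (\<forall>\<mu>\<in>invariant_measures h. emeasure \<mu> E < ennreal \<epsilon>)"
      by (rule exI[of _ "U n"]) (use Uo[of n] FU[of n] Une[of n] all in simp)
    then show False using neg by simp
  qed
  then have "\<forall>n. \<exists>\<mu>. \<mu> \<in> invariant_measures h \<and> \<not> emeasure \<mu> (U n) < ennreal \<epsilon>" by blast
  then have "\<exists>\<mu>. \<forall>n. \<mu> n \<in> invariant_measures h \<and> \<not> emeasure (\<mu> n) (U n) < ennreal \<epsilon>"
    by (rule choice)
  then obtain \<mu> where \<mu>all: "\<forall>n. \<mu> n \<in> invariant_measures h \<and> \<not> emeasure (\<mu> n) (U n) < ennreal \<epsilon>"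
    by blast
  have \<mu>I: "\<mu> n \<in> invariant_measures h" and \<mu>U: "\<not> emeasure (\<mu> n) (U n) < ennreal \<epsilon>" for n
    using \<mu>all by auto
  note PI = inv_meas_props[OF \<mu>I]
  obtain r \<mu>' where r: "strict_mono r" and s': "sets \<mu>' = sets borel" and p': "prob_space \<mu>'"
    and lim0: "\<forall>f::'a \<Rightarrow> real. continuous_on UNIV f \<longrightarrow> (\<lambda>n. \<integral>x. f x \<partial>\<mu> (r n)) \<longlonglongrightarrow> (\<integral>x. f x \<partial>\<mu>')"
    using weak_limit_exists'[of \<mu>, OF cpt PI(1) PI(2)] by blast
  have lim: "(\<lambda>n. \<integral>x. f x \<partial>\<mu> (r n)) \<longlonglongrightarrow> (\<integral>x. f x \<partial>\<mu>')" if "continuous_on UNIV f" for f :: "'a \<Rightarrow> real"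
    using lim0 that by blast
  interpret P': prob_space \<mu>' by (rule p')
  have sp': "space \<mu>' = UNIV" using sets_eq_imp_space_eq[OF s'] by simp
  have hm': "h \<in> measurable \<mu>' borel" using hm by (simp add: measurable_cong_sets[OF s' refl])
  have dist_eq: "distr \<mu>' borel h = \<mu>'"
  proof (rule finite_measure_eq_by_cont)
    show "sets (distr \<mu>' borel h) = sets borel" by simp
    show "sets \<mu>' = sets borel" by (rule s')
    show "finite_measure (distr \<mu>' borel h)"
      by (rule prob_space.finite_measure[OF P'.prob_space_distr[OF hm']])
    show "finite_measure \<mu>'" by (rule P'.finite_measure)
    fix f :: "'a \<Rightarrow> real" assume fc: "continuous_on UNIV f"
    have fm: "f \<in> borel_measurable borel" by (rule borel_measurable_continuous_onI[OF fc])
    have fhc: "continuous_on UNIV (\<lambda>x. f (h x))"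
      using continuous_on_compose[OF hc continuous_on_subset[OF fc subset_UNIV]] by (simp add: o_def)
    have "(\<lambda>n. \<integral>x. f (h x) \<partial>\<mu> (r n)) \<longlonglongrightarrow> (\<integral>x. f (h x) \<partial>\<mu>')" by (rule lim[OF fhc])
    moreover have "(\<integral>x. f (h x) \<partial>\<mu> (r n)) = (\<integral>x. f x \<partial>\<mu> (r n))" for n
    proof -
      have hmn: "h \<in> measurable (\<mu> (r n)) borel" using hm by (simp add: measurable_cong_sets[OF PI(1) refl])
      have "(\<integral>x. f (h x) \<partial>\<mu> (r n)) = (\<integral>x. f x \<partial>distr (\<mu> (r n)) borel h)"
        by (rule integral_distr[symmetric, OF hmn fm])
      also have "\<dots> = (\<integral>x. f x \<partial>\<mu> (r n))" using inv_distr_eq[OF \<mu>I hm] by simp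
      finally show ?thesis .
    qed
    ultimately have "(\<lambda>n. \<integral>x. f x \<partial>\<mu> (r n)) \<longlonglongrightarrow> (\<integral>x. f (h x) \<partial>\<mu>')" by simp
    from LIMSEQ_unique[OF this lim[OF fc]] have "(\<integral>x. f (h x) \<partial>\<mu>') = (\<integral>x. f x \<partial>\<mu>')" by simp
    then show "(\<integral>x. f x \<partial>distr \<mu>' borel h) = (\<integral>x. f x \<partial>\<mu>')"
      using integral_distr[OF hm' fm] by simp
  qed
  have \<mu>'I: "\<mu>' \<in> invariant_measures h"
    unfolding invariant_measures_def
  proof (intro CollectI conjI ballI)
    show "sets \<mu>' = sets borel" by (rule s')
    show "prob_space \<mu>'" by (rule p')
    fix B :: "'a set" assume B: "B \<in> sets borel"
    have "emeasure \<mu>' B = emeasure (distr \<mu>' borel h) B" using dist_eq by simp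
    also have "\<dots> = emeasure \<mu>' (h -` B \<inter> space \<mu>')" by (rule emeasure_distr[OF hm' B])
    finally show "emeasure \<mu>' (h -` B) = emeasure \<mu>' B" using sp' by simp
  qed
  have F0: "emeasure \<mu>' F = 0" using un unfolding universally_null_def using \<mu>'I by simp
  define g where "g m x = max 0 (min 1 (2 - (real m + 1) * infdist x F))" for m x
  have gc: "continuous_on UNIV (g m)" for m unfolding g_def
    by (intro continuous_intros continuous_on_infdist continuous_on_id)
  have g01: "0 \<le> g m x \<and> g m x \<le> 1" for m x unfolding g_def by auto
  have gm: "g m \<in> borel_measurable borel" for m by (rule borel_measurable_continuous_onI[OF gc])
  have lowb: "\<epsilon> \<le> (\<integral>x. g m x \<partial>\<mu>')" for m
  proof -
    have ev: "eventually (\<lambda>n. \<epsilon> \<le> (\<integral>x. g m x \<partial>\<mu> (r n))) sequentially"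
      unfolding eventually_sequentially
    proof (intro exI[of _ m] allI impI)
      fix n assume "m \<le> n"
      then have mr: "m \<le> r n" using seq_suble[OF r, of n] by linarith
      interpret Pn: prob_space "\<mu> (r n)" by (rule PI(2))
      have Um: "U (r n) \<in> sets (\<mu> (r n))" using Uo PI(1) by simp
      have "ennreal \<epsilon> \<le> emeasure (\<mu> (r n)) (U (r n))" using \<mu>U[of "r n"] by simp
      then have meas: "\<epsilon> \<le> measure (\<mu> (r n)) (U (r n))"
        using e by (simp add: Pn.emeasure_eq_measure)
      have ind_le: "indicator (U (r n)) x \<le> g m x" for x
      proof (cases "x \<in> U (r n)")
        case True
        then have "infdist x F < 1 / (real (r n) + 1)" unfolding U_def by simp
        also have "\<dots> \<le> 1 / (real m + 1)" using mr by (intro divide_left_mono) auto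
        finally have "(real m + 1) * infdist x F < 1" by (simp add: field_simps)
        then show ?thesis using True unfolding g_def by simp
      next
        case False then show ?thesis using g01[of m x] by simp
      qed
      have gmn: "g m \<in> borel_measurable (\<mu> (r n))"
        using gm by (simp add: measurable_cong_sets[OF PI(1) refl])
      have intg: "integrable (\<mu> (r n)) (g m)"
        by (rule Pn.integrable_const_bound[where B=1]) (use g01 gmn in auto)
      have "measure (\<mu> (r n)) (U (r n)) = (\<integral>x. indicator (U (r n)) x \<partial>\<mu> (r n))"
        using Um by simp
      also have "\<dots> \<le> (\<integral>x. g m x \<partial>\<mu> (r n))"
        by (rule integral_mono[OF _ intg]) (use Um ind_le in \<open>auto intro!: integrable_real_indicator simp: less_top[symmetric] Pn.emeasure_finite\<close>)
      finally show "\<epsilon> \<le> (\<integral>x. g m x \<partial>\<mu> (r n))" using meas by linarith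
    qed
    show ?thesis by (rule tendsto_lowerbound[OF lim[OF gc] ev]) simp
  qed
  have Fm: "F \<in> sets \<mu>'" using Fc s' by simp
  have "(\<lambda>m. \<integral>x. g m x \<partial>\<mu>') \<longlonglongrightarrow> (\<integral>x. indicator F x \<partial>\<mu>')"
  proof (rule integral_dominated_convergence[where w="\<lambda>_. 1"])
    show "(indicator F :: 'a \<Rightarrow> real) \<in> borel_measurable \<mu>'" using Fm by simp
    show "g m \<in> borel_measurable \<mu>'" for m using gm by (simp add: measurable_cong_sets[OF s' refl])
    show "integrable \<mu>' (\<lambda>_. 1::real)" by simp
    show "AE x in \<mu>'. norm (g m x) \<le> 1" for m by (rule AE_I2) (use g01 in simp)
    show "AE x in \<mu>'. (\<lambda>m. g m x) \<longlonglongrightarrow> indicator F x"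
    proof (rule AE_I2)
      fix x
      show "(\<lambda>m. g m x) \<longlonglongrightarrow> indicator F x"
      proof (cases "x \<in> F")
        case True
        then show ?thesis by (simp add: g_def infdist_zero)
      next
        case False
        have d: "infdist x F > 0"
          using False in_closed_iff_infdist_zero[OF Fc Fne] infdist_nonneg[of x F]
          by (metis less_eq_real_def)
        obtain K :: nat where K: "2 / infdist x F < real K" using reals_Archimedean2 by blast
        have "eventually (\<lambda>m. g m x = 0) sequentially"
          unfolding eventually_sequentially
        proof (intro exI allI impI)
          fix m assume "K \<le> m"
          then have "2 / infdist x F < real m + 1" using K by linarith
          then have "2 < (real m + 1) * infdist x F" using d by (simp add: field_simps)
          then show "g m x = 0" unfolding g_def by simp
        qed
        then show ?thesis using False by (simp add: tendsto_eventually)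
      qed
    qed
  qed
  then have "(\<lambda>m. \<integral>x. g m x \<partial>\<mu>') \<longlonglongrightarrow> measure \<mu>' F" using Fm by simp
  then have "\<epsilon> \<le> measure \<mu>' F" by (rule tendsto_lowerbound) (use lowb in simp_all)
  moreover have "measure \<mu>' F = 0" using F0 by (simp add: P'.emeasure_eq_measure)
  ultimately show False using e by linarith
qed

lemma no_periodic:
  fixes h :: "'a::metric_space \<Rightarrow> 'a"
  assumes inf: "infinite (UNIV :: 'a set)" and min: "minimal_map h"
    and q: "q > 0" and per: "(h ^^ q) y = y"
  shows False
proof -
  define Orb where "Orb = range (\<lambda>k. (h ^^ k) y)"
  have mult: "(h ^^ (m * q)) y = y" for m
  proof (induction m)
    case 0 then show ?case by simp
  next
    case (Suc m)
    have "(h ^^ (Suc m * q)) y = (h ^^ q) ((h ^^ (m * q)) y)"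
      by (simp add: funpow_add)
    then show ?case using Suc per by simp
  qed
  have red: "(h ^^ k) y = (h ^^ (k mod q)) y" for k
  proof -
    have "k = k mod q + (k div q) * q" by simp
    then have "(h ^^ k) y = (h ^^ (k mod q)) ((h ^^ ((k div q) * q)) y)"
      by (metis comp_apply funpow_add)
    then show ?thesis using mult by simp
  qed
  have "Orb \<subseteq> (\<lambda>k. (h ^^ k) y) ` {..<q}"
  proof
    fix z assume "z \<in> Orb"
    then obtain k where z: "z = (h ^^ k) y" unfolding Orb_def by blast
    show "z \<in> (\<lambda>k. (h ^^ k) y) ` {..<q}"
      by (rule image_eqI[of _ _ "k mod q"]) (use z red[of k] q in auto)
  qed
  then have fin: "finite Orb" by (rule finite_subset) simp
  have "h ` Orb = Orb"
  proof
    show "h ` Orb \<subseteq> Orb" unfolding Orb_def by (auto simp del: funpow.simps simp: funpow_Suc_right[symmetric] comp_def)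
      (metis funpow.simps(2) comp_apply rangeI)
    show "Orb \<subseteq> h ` Orb"
    proof
      fix z assume "z \<in> Orb"
      then obtain k where z: "z = (h ^^ k) y" unfolding Orb_def by blast
      have "z = (h ^^ (k + q)) y" using z per by (simp add: funpow_add)
      also have "k + q = Suc (k + q - 1)" using q by simp
      finally have "z = h ((h ^^ (k + q - 1)) y)" by simp
      then show "z \<in> h ` Orb" unfolding Orb_def by blast
    qed
  qed
  moreover have "closed Orb" using fin by (rule finite_imp_closed)
  ultimately have "Orb = {} \<or> Orb = UNIV" using min unfolding minimal_map_def by blast
  moreover have "Orb \<noteq> {}" unfolding Orb_def by simp
  ultimately have "Orb = UNIV" by blast
  then show False using fin inf by simp
qed

lemma singleton_null:
  fixes h :: "'a::metric_space \<Rightarrow> 'a"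
  assumes inf: "infinite (UNIV :: 'a set)" and hinj: "inj h" and min: "minimal_map h"
  shows "universally_null h {x0}"
  unfolding universally_null_def
proof (intro conjI ballI)
  show "{x0} \<in> sets borel" by simp
  fix \<mu> assume \<mu>I: "\<mu> \<in> invariant_measures h"
  note P = inv_meas_props[OF \<mu>I]
  interpret prob_space \<mu> by (rule P(2))
  define p where "p k = (h ^^ k) x0" for k
  have injp: "inj p"
  proof (rule injI)
    fix i j assume eq: "p i = p j"
    show "i = j"
    proof (rule ccontr)
      assume "i \<noteq> j"
      then consider "i < j" | "j < i" by linarith
      then show False
      proof cases
        case 1
        have "(h ^^ (j - i + i)) x0 = (h ^^ (j - i)) ((h ^^ i) x0)" by (simp only: funpow_add comp_apply)
        moreover have "j - i + i = j" using 1 by simp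
        ultimately have "(h ^^ (j - i)) (p i) = p j" unfolding p_def by simp
        then have "(h ^^ (j - i)) (p i) = p i" using eq by simp
        then show False using no_periodic[OF inf min, of "j - i" "p i"] 1 by simp
      next
        case 2
        have "(h ^^ (i - j + j)) x0 = (h ^^ (i - j)) ((h ^^ j) x0)" by (simp only: funpow_add comp_apply)
        moreover have "i - j + j = i" using 2 by simp
        ultimately have "(h ^^ (i - j)) (p j) = p i" unfolding p_def by simp
        then have "(h ^^ (i - j)) (p j) = p j" using eq by simp
        then show False using no_periodic[OF inf min, of "i - j" "p j"] 2 by simp
      qed
    qed
  qed
  have step: "measure \<mu> {p (Suc k)} = measure \<mu> {p k}" for k
  proof -
    have "h -` {p (Suc k)} = {p k}"
      using hinj unfolding p_def by (auto simp: inj_eq)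
    then have "emeasure \<mu> {p k} = emeasure \<mu> {p (Suc k)}"
      using P(4)[of "{p (Suc k)}"] by simp
    then show ?thesis by (simp add: measure_def)
  qed
  have const: "measure \<mu> {p k} = measure \<mu> {x0}" for k
    by (induction k) (simp_all add: step, simp add: p_def)
  have bound: "real N * measure \<mu> {x0} \<le> 1" for N
  proof -
    have "measure \<mu> (p ` {..<N}) = (\<Sum>x\<in>p ` {..<N}. measure \<mu> {x})"
      by (rule finite_measure_eq_sum_singleton) (use P(1) in auto)
    also have "\<dots> = (\<Sum>k<N. measure \<mu> {p k})"
      by (rule sum.reindex_cong[OF inj_on_subset[OF injp subset_UNIV] refl]) simp
    also have "\<dots> = real N * measure \<mu> {x0}" using const by simp
    finally show ?thesis using prob_le_1[of "p ` {..<N}"] by simp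
  qed
  have "measure \<mu> {x0} \<le> 0"
  proof (rule ccontr)
    assume "\<not> ?thesis"
    then have c: "measure \<mu> {x0} > 0" by simp
    obtain N :: nat where "1 / measure \<mu> {x0} < real N" using reals_Archimedean2 by blast
    then have "1 < real N * measure \<mu> {x0}" using c by (simp add: field_simps)
    then show False using bound[of N] by simp
  qed
  then have "measure \<mu> {x0} = 0" using measure_nonneg[of \<mu> "{x0}"] by linarith
  then show "emeasure \<mu> {x0} = 0" by (simp add: emeasure_eq_measure)
qed

theorem lemma2p4:
  fixes h :: "'a::metric_space \<Rightarrow> 'a" and F :: "'a set" and \<epsilon> :: real
  assumes "compact (UNIV :: 'a set)"
    and "infinite (UNIV :: 'a set)"
    and "\<exists>g. homeomorphism UNIV UNIV h g"
    and "minimal_map h"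
    and "\<epsilon> > 0"
    and "closed F"
    and "universally_null h F"
  shows "\<exists>E. open E \<and> E \<noteq> {} \<and> F \<subseteq> E \<and>
             (\<forall>\<mu>\<in>invariant_measures h. emeasure \<mu> E < ennreal \<epsilon>)"
proof -
  obtain g where hg: "homeomorphism UNIV UNIV h g" using assms(3) by blast
  have hc: "continuous_on UNIV h" using hg unfolding homeomorphism_def by simp
  have hinj: "inj h"
  proof (rule injI)
    fix x y assume "h x = h y"
    then have "g (h x) = g (h y)" by simp
    then show "x = y" using hg unfolding homeomorphism_def by simp
  qed
  show ?thesis
  proof (cases "F = {}")
    case False
    show ?thesis by (rule main_case[OF assms(1) hc assms(5) assms(6) False assms(7)])
  next
    case True
    define x0 where "x0 = (undefined :: 'a)"
    have "\<exists>E. open E \<and> E \<noteq> {} \<and> {x0} \<subseteq> E \<and>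
             (\<forall>\<mu>\<in>invariant_measures h. emeasure \<mu> E < ennreal \<epsilon>)"
      by (rule main_case[OF assms(1) hc assms(5)]) (auto intro: singleton_null[OF assms(2) hinj assms(4)])
    then show ?thesis using True by blast
  qed
qed

end
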